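(* Let $A=k[x_1][x_2;\alpha_2,\delta_2]_p\cdots[x_n;\alpha_n,\delta_n]_p$ be an iterated Poisson polynomial algebra over a field $k$ of characteristic zero, supporting a rational Poisson action of a torus $H=(k^\times)^r$ such that $x_1,\dots,x_n$ are $H$-eigenvectors. Assume there exist $\eta_1,\dots,\eta_n\in\mathfrak h=\operatorname{Lie}H$ such that $\eta_i.x_j=\alpha_i(x_j)$ for $i>j$ and the $\eta_i$-eigenvalue $s_i$ of $x_i$ is nonzero for each $i$. Then $\alpha_i\delta_i=\delta_i(\alpha_i+s_i)$ for all $i$.
   Context: If $B$ is a Poisson algebra, $\alpha$ a Poisson derivation of $B$ and $\delta$ a derivation of $B$ with $\delta(\{a,b\})=\{\delta(a),b\}+\{a,\delta(b)\}+\alpha(a)\delta(b)-\delta(a)\alpha(b)$, then $B[x;\alpha,\delta]_p$ is $B[x]$ with the unique Poisson bracket extending that of $B$ with $\{x,b\}=\alpha(b)x+\delta(b)$; an iterated Poisson polynomial algebra iterates this starting from $k[x_1]$. A rational Poisson action of $H$ is an action by Poisson automorphisms with $A$ the direct sum of $H$-eigenspaces $A_x$, $x\in X(H)\cong\mathbb Z^r$ ($(m_i)\leftrightarrow h\mapsto\prod h_i^{m_i}$). $\mathfrak h=k^r$ acts by $\eta.a=(\eta|x)a$ for $a\in A_x$ (dot product), $(\eta|x)$ being the $\eta$-eigenvalue of $a$. *)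

theory Defs
  imports Main "HOL-Library.Poly_Mapping"
begin

text \<open>Commutative polynomials over a field 'k in the variables x_1, x_2, ...,
  represented as finitely supported maps from monomials (exponent vectors) to coefficients.\<close>
type_synonym 'k mpoly = "(nat \<Rightarrow>\<^sub>0 nat) \<Rightarrow>\<^sub>0 'k"

definition Const :: "'k::comm_ring_1 \<Rightarrow> 'k mpoly" where
  "Const c = Poly_Mapping.single 0 c"

definition smult :: "'k::comm_ring_1 \<Rightarrow> 'k mpoly \<Rightarrow> 'k mpoly" where
  "smult c p = Const c * p"

definition Var :: "nat \<Rightarrow> 'k::comm_ring_1 mpoly" where
  "Var i = Poly_Mapping.single (Poly_Mapping.single i 1) 1"

definition Bsub :: "nat \<Rightarrow> 'k::comm_ring_1 mpoly set" where
  "Bsub i = {p. \<forall>m \<in> Poly_Mapping.keys p. \<forall>j \<in> Poly_Mapping.keys (m :: nat \<Rightarrow>\<^sub>0 nat). 1 \<le> j \<and> j \<le> i}"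

definition poisson_bracket ::
  "'k::field mpoly set \<Rightarrow> ('k mpoly \<Rightarrow> 'k mpoly \<Rightarrow> 'k mpoly) \<Rightarrow> bool" where
  "poisson_bracket B br \<longleftrightarrow>
     (\<forall>a\<in>B. \<forall>b\<in>B. br a b \<in> B) \<and>
     (\<forall>a\<in>B. \<forall>b\<in>B. \<forall>c\<in>B. br (a + b) c = br a c + br b c) \<and>
     (\<forall>a\<in>B. \<forall>b\<in>B. \<forall>c. br (smult c a) b = smult c (br a b)) \<and>
     (\<forall>a\<in>B. \<forall>b\<in>B. br a b = - br b a) \<and>
     (\<forall>a\<in>B. \<forall>b\<in>B. \<forall>c\<in>B. br a (br b c) + br b (br c a) + br c (br a b) = 0) \<and>
     (\<forall>a\<in>B. \<forall>b\<in>B. \<forall>c\<in>B. br a (b * c) = br a b * c + b * br a c)"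

definition derivation :: "'k::field mpoly set \<Rightarrow> ('k mpoly \<Rightarrow> 'k mpoly) \<Rightarrow> bool" where
  "derivation B d \<longleftrightarrow>
     (\<forall>a\<in>B. d a \<in> B) \<and>
     (\<forall>a\<in>B. \<forall>b\<in>B. d (a + b) = d a + d b) \<and>
     (\<forall>a\<in>B. \<forall>c. d (smult c a) = smult c (d a)) \<and>
     (\<forall>a\<in>B. \<forall>b\<in>B. d (a * b) = d a * b + a * d b)"

definition poisson_derivation ::
  "'k::field mpoly set \<Rightarrow> ('k mpoly \<Rightarrow> 'k mpoly \<Rightarrow> 'k mpoly) \<Rightarrow> ('k mpoly \<Rightarrow> 'k mpoly) \<Rightarrow> bool" where
  "poisson_derivation B br a \<longleftrightarrow> derivation B a \<and>
     (\<forall>u\<in>B. \<forall>v\<in>B. a (br u v) = br (a u) v + br u (a v))"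

definition twisted_derivation ::
  "'k::field mpoly set \<Rightarrow> ('k mpoly \<Rightarrow> 'k mpoly \<Rightarrow> 'k mpoly) \<Rightarrow> ('k mpoly \<Rightarrow> 'k mpoly)
     \<Rightarrow> ('k mpoly \<Rightarrow> 'k mpoly) \<Rightarrow> bool" where
  "twisted_derivation B br a d \<longleftrightarrow> derivation B d \<and>
     (\<forall>u\<in>B. \<forall>v\<in>B. d (br u v) = br (d u) v + br u (d v) + a u * d v - d u * a v)"

definition iterated_poisson ::
  "nat \<Rightarrow> ('k::field mpoly \<Rightarrow> 'k mpoly \<Rightarrow> 'k mpoly) \<Rightarrow> (nat \<Rightarrow> 'k mpoly \<Rightarrow> 'k mpoly)
     \<Rightarrow> (nat \<Rightarrow> 'k mpoly \<Rightarrow> 'k mpoly) \<Rightarrow> bool" where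
  "iterated_poisson n br \<alpha> \<delta> \<longleftrightarrow>
     (\<forall>i\<in>{1..n}. poisson_bracket (Bsub i) br) \<and>
     (\<forall>i\<in>{2..n}. poisson_derivation (Bsub (i - 1)) br (\<alpha> i) \<and>
                 twisted_derivation (Bsub (i - 1)) br (\<alpha> i) (\<delta> i) \<and>
                 (\<forall>b\<in>Bsub (i - 1). br (Var i) b = \<alpha> i b * Var i + \<delta> i b))"

text \<open>Torus H = (k^x)^r, indexed by a finite type 'r; characters X(H) = Z^r.\<close>
definition torus :: "('r::finite \<Rightarrow> 'k::field) set" where
  "torus = {h. \<forall>l. h l \<noteq> 0}"

definition character :: "('r::finite \<Rightarrow> int) \<Rightarrow> ('r \<Rightarrow> 'k::field) \<Rightarrow> 'k" where
  "character m h = (\<Prod>l\<in>UNIV. power_int (h l) (m l))"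

definition eigenspace ::
  "'k::field mpoly set \<Rightarrow> (('r::finite \<Rightarrow> 'k) \<Rightarrow> 'k mpoly \<Rightarrow> 'k mpoly) \<Rightarrow> ('r \<Rightarrow> int) \<Rightarrow> 'k mpoly set" where
  "eigenspace A \<rho> m = {a\<in>A. \<forall>h\<in>torus. \<rho> h a = smult (character m h) a}"

text \<open>The pairing (eta|m) for eta in Lie H = k^r and m in X(H) = Z^r.\<close>
definition pairing :: "('r::finite \<Rightarrow> 'k::field) \<Rightarrow> ('r \<Rightarrow> int) \<Rightarrow> 'k" where
  "pairing \<eta> m = (\<Sum>l\<in>UNIV. \<eta> l * of_int (m l))"

definition poisson_automorphism ::
  "'k::field mpoly set \<Rightarrow> ('k mpoly \<Rightarrow> 'k mpoly \<Rightarrow> 'k mpoly) \<Rightarrow> ('k mpoly \<Rightarrow> 'k mpoly) \<Rightarrow> bool" where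
  "poisson_automorphism A br f \<longleftrightarrow> bij_betw f A A \<and> f 1 = 1 \<and>
     (\<forall>a\<in>A. \<forall>b\<in>A. f (a + b) = f a + f b) \<and>
     (\<forall>a\<in>A. \<forall>b\<in>A. f (a * b) = f a * f b) \<and>
     (\<forall>a\<in>A. \<forall>c. f (smult c a) = smult c (f a)) \<and>
     (\<forall>a\<in>A. \<forall>b\<in>A. f (br a b) = br (f a) (f b))"

definition rational_poisson_action ::
  "'k::field mpoly set \<Rightarrow> ('k mpoly \<Rightarrow> 'k mpoly \<Rightarrow> 'k mpoly)
     \<Rightarrow> (('r::finite \<Rightarrow> 'k) \<Rightarrow> 'k mpoly \<Rightarrow> 'k mpoly) \<Rightarrow> bool" where
  "rational_poisson_action A br \<rho> \<longleftrightarrow>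
     (\<forall>h\<in>torus. poisson_automorphism A br (\<rho> h)) \<and>
     (\<forall>a\<in>A. \<rho> (\<lambda>_. 1) a = a) \<and>
     (\<forall>h\<in>torus. \<forall>h'\<in>torus. \<forall>a\<in>A. \<rho> (\<lambda>l. h l * h' l) a = \<rho> h (\<rho> h' a)) \<and>
     (\<forall>a\<in>A. \<exists>S f. finite S \<and> (\<forall>m\<in>S. f m \<in> eigenspace A \<rho> m) \<and> a = (\<Sum>m\<in>S. f m)) \<and>
     (\<forall>S f. finite S \<and> (\<forall>m\<in>S. f m \<in> eigenspace A \<rho> m) \<and> (\<Sum>m\<in>S. f m) = 0
        \<longrightarrow> (\<forall>m\<in>S. f m = 0))"

end

theory Submission
  imports Defs
begin

abbreviation lk where "lk \<equiv> Poly_Mapping.lookup"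
abbreviation sg where "sg \<equiv> Poly_Mapping.single"
abbreviation ks where "ks \<equiv> Poly_Mapping.keys"

lemma mp_induct:
  fixes p :: "'a \<Rightarrow>\<^sub>0 'b::comm_monoid_add"
  assumes "P 0" "\<And>f a b. a \<notin> ks f \<Longrightarrow> b \<noteq> 0 \<Longrightarrow> P f \<Longrightarrow> P (f + sg a b)"
  shows "P p"
proof (induct p rule: Poly_Mapping.update_induct)
  case const then show ?case using assms(1) .
next
  case (update f a b)
  have "Poly_Mapping.update a b f = f + sg a b"
    using update(1) by (intro poly_mapping_eqI) (auto simp: lookup_update lookup_add lookup_single in_keys_iff when_def)
  then show ?case using assms(2) update by simp
qed

lemma keys_upd: "a \<notin> ks f \<Longrightarrow> b \<noteq> 0 \<Longrightarrow> ks (f + sg a b) = insert a (ks f)"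
  by (auto simp: in_keys_iff lookup_add lookup_single when_def split: if_splits)

definition scal :: "((nat \<Rightarrow>\<^sub>0 nat) \<Rightarrow> 'k::field) \<Rightarrow> 'k mpoly \<Rightarrow> 'k mpoly" where
  "scal g p = Poly_Mapping.mapp (\<lambda>\<mu> c. g \<mu> * c) p"

lemma lookup_scal: "lk (scal g p) \<mu> = g \<mu> * lk p \<mu>"
  by (auto simp: scal_def lookup_mapp when_def in_keys_iff)

lemma scal_add: "scal g (p + q) = scal g p + scal g q"
  by (intro poly_mapping_eqI) (simp add: lookup_scal lookup_add algebra_simps)

lemma scal_single: "scal g (sg \<mu> c) = sg \<mu> (g \<mu> * c)"
  by (intro poly_mapping_eqI) (simp add: lookup_scal lookup_single when_def)

lemma scal_zero[simp]: "scal g 0 = 0"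
  by (intro poly_mapping_eqI) (simp add: lookup_scal)

lemma scal_mult:
  assumes "\<And>\<mu> \<nu>. g (\<mu> + \<nu>) = g \<mu> * g \<nu>"
  shows "scal g (p * q) = scal g p * scal g q"
proof (induct p rule: mp_induct)
  case 1 then show ?case by simp
next
  case (2 f a b)
  have "scal g (sg a b * q) = scal g (sg a b) * scal g q"
  proof (induct q rule: mp_induct)
    case 1 then show ?case by simp
  next
    case (2 f' a' b')
    then show ?case by (simp add: distrib_left scal_add scal_single mult_single assms ac_simps)
  qed
  then show ?case using 2 by (simp add: distrib_right scal_add)
qed

lemma scal_deriv:
  assumes "\<And>\<mu> \<nu>. g (\<mu> + \<nu>) = g \<mu> + g \<nu>"
  shows "scal g (p * q) = scal g p * q + p * scal g q"
proof (induct p rule: mp_induct)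
  case 1 then show ?case by simp
next
  case (2 f a b)
  have "scal g (sg a b * q) = scal g (sg a b) * q + sg a b * scal g q"
  proof (induct q rule: mp_induct)
    case 1 then show ?case by simp
  next
    case (2 f' a' b')
    then show ?case by (simp add: distrib_left scal_add scal_single mult_single assms algebra_simps flip: single_add)
  qed
  then show ?case using 2 by (simp add: distrib_right scal_add algebra_simps)
qed

lemma smult_scal: "smult c p = scal (\<lambda>_. c) p"
proof (induct p rule: mp_induct)
  case 1 then show ?case by (simp add: smult_def)
next
  case (2 f a b)
  then show ?case by (simp add: smult_def Const_def distrib_left scal_add scal_single mult_single)
qed

lemma lookup_smult: "lk (smult (c::'k::field) p) \<mu> = c * lk p \<mu>"
  by (simp add: smult_scal lookup_scal)

lemma Bsub_iff: "p \<in> Bsub k \<longleftrightarrow> (\<forall>\<mu>\<in>ks p. ks \<mu> \<subseteq> {1..k})"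
  unfolding Bsub_def subset_iff atLeastAtMost_iff by blast

lemma Bsub_Const[simp]: "Const c \<in> Bsub k"
  by (simp add: Bsub_iff Const_def)

lemma Bsub_zero[simp]: "0 \<in> Bsub k"
  by (simp add: Bsub_iff)

lemma Bsub_one[simp]: "1 \<in> Bsub k"
  by (simp add: Bsub_iff)

lemma Bsub_Var: "1 \<le> j \<Longrightarrow> j \<le> k \<Longrightarrow> Var j \<in> Bsub k"
  by (simp add: Bsub_iff Var_def)

lemma Bsub_add: "p \<in> Bsub k \<Longrightarrow> q \<in> Bsub k \<Longrightarrow> p + q \<in> Bsub k"
proof -
  assume "p \<in> Bsub k" "q \<in> Bsub k"
  then show ?thesis unfolding Bsub_iff using keys_add[of p q] by (meson Un_iff subsetD)
qed

lemma keys_nat_add: "ks ((\<mu>::nat \<Rightarrow>\<^sub>0 nat) + \<nu>) \<subseteq> ks \<mu> \<union> ks \<nu>"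
  by (rule keys_add)

lemma Bsub_mult: "p \<in> Bsub k \<Longrightarrow> q \<in> Bsub k \<Longrightarrow> p * q \<in> Bsub k"
  unfolding Bsub_iff
proof (intro ballI)
  fix \<mu> assume p: "\<forall>\<mu>\<in>ks p. ks \<mu> \<subseteq> {1..k}" and q: "\<forall>\<mu>\<in>ks q. ks \<mu> \<subseteq> {1..k}"
    and m: "\<mu> \<in> ks (p * q)"
  then obtain a b where "\<mu> = a + b" "a \<in> ks p" "b \<in> ks q" using keys_mult[of p q] by auto
  then show "ks \<mu> \<subseteq> {1..k}" using p q keys_nat_add[of a b] by (meson Un_subset_iff subset_trans)
qed

lemma Bsub_smult: "p \<in> Bsub k \<Longrightarrow> smult c p \<in> Bsub k"
  by (simp add: smult_def Bsub_mult)

lemma Bsub_mono: "k \<le> n \<Longrightarrow> p \<in> Bsub k \<Longrightarrow> p \<in> Bsub n"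
  unfolding Bsub_iff by (meson atLeastAtMost_iff order_trans subset_iff)


lemma Var_pow: "Var a ^ e = sg (sg a e) (1::'k::comm_ring_1)"
proof (induct e)
  case (Suc e)
  have "sg a (Suc 0) + sg a e = sg a (Suc e)" by (simp flip: single_add)
  then show ?case using Suc by (simp add: Var_def mult_single)
qed (simp)

lemma Bsub_induct:
  fixes p :: "'k::field mpoly"
  assumes p: "p \<in> Bsub k"
  and C: "\<And>c. P (Const c)"
  and V: "\<And>j q. 1 \<le> j \<Longrightarrow> j \<le> k \<Longrightarrow> q \<in> Bsub k \<Longrightarrow> P q \<Longrightarrow> P (Var j * q)"
  and A: "\<And>p q. p \<in> Bsub k \<Longrightarrow> q \<in> Bsub k \<Longrightarrow> P p \<Longrightarrow> P q \<Longrightarrow> P (p + q)"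
  shows "P p"
proof -
  have mono: "\<forall>b::'k. ks \<mu> \<subseteq> {1..k} \<longrightarrow> P (sg \<mu> b)" for \<mu>
  proof (induct \<mu> rule: mp_induct)
    case 1 then show ?case using C by (simp add: Const_def)
  next
    case (2 f a e)
    show ?case
    proof (intro allI impI)
      fix b :: 'k assume ks: "ks (f + sg a e) \<subseteq> {1..k}"
      then have a: "a \<in> {1..k}" and kf: "ks f \<subseteq> {1..k}" using keys_upd[OF 2(1,2)] by auto
      have qB: "sg f b \<in> Bsub k" using kf by (simp add: Bsub_iff)
      have Pq: "P (sg f b)" using 2(3) kf by blast
      have "Var a ^ e' * sg f b \<in> Bsub k \<and> P (Var a ^ e' * sg f b)" for e'
      proof (induct e')
        case 0 then show ?case using qB Pq by simp
      next
        case (Suc e')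
        have a1: "1 \<le> a" "a \<le> k" using a by auto
        have eq: "Var a ^ Suc e' * sg f b = Var a * (Var a ^ e' * sg f b)" by (simp add: mult.assoc)
        show ?case unfolding eq using V[OF a1, of "Var a ^ e' * sg f b"] Suc Bsub_mult[OF Bsub_Var[OF a1]]
          by blast
      qed
      moreover have "sg (f + sg a e) b = Var a ^ e * sg f b"
        by (simp add: Var_pow mult_single add.commute)
      ultimately show "P (sg (f + sg a e) b)" by simp
    qed
  qed
  have "\<forall>p. p \<in> Bsub k \<longrightarrow> P p" 
  proof
    fix p :: "'k mpoly"
    show "p \<in> Bsub k \<longrightarrow> P p"
    proof (induct p rule: mp_induct)
      case 1 then show ?case using C[of 0] by (simp add: Const_def)
    next
      case (2 f a b)
      show ?case
      proof
        assume B: "f + sg a b \<in> Bsub k"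
        have kk: "ks (f + sg a b) = insert a (ks f)" using keys_upd[OF 2(1,2)] .
        have fB: "f \<in> Bsub k" using B unfolding Bsub_iff kk by blast
        have ka: "ks a \<subseteq> {1..k}" using B unfolding Bsub_iff kk by blast
        have sB: "sg a b \<in> Bsub k" using ka by (simp add: Bsub_iff)
        have "P f" using 2(3) fB by blast
        moreover have "P (sg a b)" using mono ka by blast
        ultimately show "P (f + sg a b)" using A[OF fB sB] by blast
      qed
    qed
  qed
  then show ?thesis using p by blast
qed

definition wt :: "(nat \<Rightarrow> 'r \<Rightarrow> int) \<Rightarrow> (nat \<Rightarrow>\<^sub>0 nat) \<Rightarrow> 'r \<Rightarrow> int" where
  "wt \<chi> \<mu> = (\<lambda>l. \<Sum>j\<in>ks \<mu>. int (lk \<mu> j) * \<chi> j l)"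

lemma wt_super: "finite K \<Longrightarrow> ks \<mu> \<subseteq> K \<Longrightarrow> wt \<chi> \<mu> l = (\<Sum>j\<in>K. int (lk \<mu> j) * \<chi> j l)"
  unfolding wt_def by (rule sum.mono_neutral_left) (auto simp: in_keys_iff)

lemma wt_add: "wt \<chi> (\<mu> + \<nu>) l = wt \<chi> \<mu> l + wt \<chi> \<nu> l"
proof -
  let ?K = "ks \<mu> \<union> ks \<nu>"
  have f: "finite ?K" by simp
  have "wt \<chi> (\<mu> + \<nu>) l = (\<Sum>j\<in>?K. int (lk (\<mu> + \<nu>) j) * \<chi> j l)"
    using keys_add[of \<mu> \<nu>] by (intro wt_super) auto
  also have "\<dots> = (\<Sum>j\<in>?K. int (lk \<mu> j) * \<chi> j l) + (\<Sum>j\<in>?K. int (lk \<nu> j) * \<chi> j l)"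
    by (simp add: lookup_add algebra_simps sum.distrib)
  also have "\<dots> = wt \<chi> \<mu> l + wt \<chi> \<nu> l"
    using wt_super[OF f, of \<mu>] wt_super[OF f, of \<nu>] by (metis Un_upper1 Un_upper2)
  finally show ?thesis .
qed

lemma wt_zero[simp]: "wt \<chi> 0 = (\<lambda>_. 0)"
  by (simp add: wt_def fun_eq_iff)

lemma wt_single: "wt \<chi> (sg j 1) = \<chi> j"
  by (simp add: wt_def fun_eq_iff)

lemma char_add: "h \<in> torus \<Longrightarrow> character (\<lambda>l. a l + b l) h = character a h * character b h"
  unfolding character_def torus_def
  by (simp add: power_int_add prod.distrib)

lemma char_zero[simp]: "character (\<lambda>_. 0) h = 1"
  by (simp add: character_def)

lemma two_powi: "(2::'k::field_char_0) powi d = 1 \<Longrightarrow> d = 0"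
proof (cases "d \<ge> 0")
  case True
  then obtain m where d: "d = int m" by (metis nonneg_eq_int)
  assume "(2::'k) powi d = 1"
  then have "(2::'k) ^ m = 1" by (simp add: d)
  then have "of_nat (2 ^ m) = (of_nat 1 :: 'k)" by simp
  then have "(2::nat) ^ m = 1" using of_nat_eq_iff by blast
  then show ?thesis using d by simp
next
  case False
  then obtain m where d: "d = - int m" by (metis nonneg_eq_int neg_0_le_iff_le nle_le minus_minus)
  assume "(2::'k) powi d = 1"
  then have "inverse ((2::'k) ^ m) = 1" by (simp add: d power_int_minus)
  then have "(2::'k) ^ m = 1" by (metis inverse_1 inverse_inverse_eq)
  then have "of_nat (2 ^ m) = (of_nat 1 :: 'k)" by simp
  then have "(2::nat) ^ m = 1" using of_nat_eq_iff by blast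
  then show ?thesis using d by simp
qed

lemma char_inj:
  fixes a b :: "'r::finite \<Rightarrow> int"
  assumes "\<forall>h\<in>(torus :: ('r \<Rightarrow> 'k::field_char_0) set). character a h = character b h"
  shows "a = b"
proof
  fix l0
  define h :: "'r \<Rightarrow> 'k" where "h = (\<lambda>l. if l = l0 then 2 else 1)"
  have ht: "h \<in> torus" by (simp add: torus_def h_def)
  have ch: "character c h = 2 powi (c l0)" for c :: "'r \<Rightarrow> int"
  proof -
    have "character c h = (\<Prod>l\<in>UNIV. if l = l0 then 2 powi (c l0) else 1)"
      unfolding character_def h_def by (rule prod.cong) auto
    also have "\<dots> = 2 powi (c l0)" by (simp add: prod.delta)
    finally show ?thesis .
  qed
  have "(2::'k) powi (a l0) = 2 powi (b l0)" using assms ht ch by metis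
  then have "(2::'k) powi (a l0 - b l0) = 1" by (simp add: power_int_diff)
  then show "a l0 = b l0" using two_powi by fastforce
qed

lemma pairing_add: "pairing \<eta> (\<lambda>l. a l + b l) = pairing \<eta> a + pairing \<eta> b"
  by (simp add: pairing_def algebra_simps sum.distrib)

lemma pairing_zero[simp]: "pairing \<eta> (\<lambda>_. 0) = 0"
  by (simp add: pairing_def)

lemma Bsub_diff: "p \<in> Bsub k \<Longrightarrow> q \<in> Bsub k \<Longrightarrow> p - q \<in> Bsub k"
proof -
  assume "p \<in> Bsub k" "q \<in> Bsub k"
  then show ?thesis unfolding Bsub_iff using keys_diff[of p q] by (meson Un_iff subsetD)
qed

lemma smult_one: "smult c (1::'k::field mpoly) = Const c"
  by (simp add: smult_def)

lemma Const_mult: "Const a * Const b = (Const (a * b) :: 'k::field mpoly)"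
  by (simp add: Const_def mult_single)

lemma Const_add: "Const a + Const b = (Const (a + b) :: 'k::field mpoly)"
  by (simp add: Const_def single_add)

lemma smult_Var: "smult c (Var j) = sg (sg j 1) (c::'k::field)"
  by (simp add: smult_def Const_def Var_def mult_single)

lemma deriv_basic:
  assumes "derivation B d" "1 \<in> B"
  shows "d 0 = 0" "d (Const c) = 0"
proof -
  have "d 1 = d 1 + d 1" using assms unfolding derivation_def by (metis mult_1 mult_1_right)
  then have d1: "d 1 = 0" by (metis add_cancel_right_right)
  have "d (smult 0 1) = smult 0 (d 1)" using assms unfolding derivation_def by blast
  then show "d 0 = 0" by (simp add: smult_def Const_def)
  have "d (smult c 1) = smult c (d 1)" using assms unfolding derivation_def by blast
  then show "d (Const c) = 0" using d1 by (simp add: smult_def)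
qed

definition Rh :: "(nat \<Rightarrow> 'r \<Rightarrow> int) \<Rightarrow> ('r::finite \<Rightarrow> 'k::field) \<Rightarrow> 'k mpoly \<Rightarrow> 'k mpoly" where
  "Rh \<chi> h = scal (\<lambda>\<mu>. character (wt \<chi> \<mu>) h)"

definition Eop :: "(nat \<Rightarrow> 'r \<Rightarrow> int) \<Rightarrow> ('r::finite \<Rightarrow> 'k::field) \<Rightarrow> 'k mpoly \<Rightarrow> 'k mpoly" where
  "Eop \<chi> \<eta> = scal (\<lambda>\<mu>. pairing \<eta> (wt \<chi> \<mu>))"

lemma wt_add_fun: "wt \<chi> (\<mu> + \<nu>) = (\<lambda>l. wt \<chi> \<mu> l + wt \<chi> \<nu> l)"
  by (rule ext) (rule wt_add)

lemma Rh_Var: "Rh \<chi> h (Var j) = smult (character (\<chi> j) h) (Var j)"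
  unfolding smult_Var unfolding Rh_def Var_def scal_single wt_single by simp

lemma Eop_Var: "Eop \<chi> \<eta> (Var j) = smult (pairing \<eta> (\<chi> j)) (Var j)"
  unfolding smult_Var unfolding Eop_def Var_def scal_single wt_single by simp

lemma hom_agree:
  fixes f :: "'k::field mpoly \<Rightarrow> 'k mpoly" and h :: "'r::finite \<Rightarrow> 'k"
  assumes ht: "h \<in> torus" and f1: "f 1 = 1"
  and fadd: "\<forall>a\<in>Bsub n. \<forall>b\<in>Bsub n. f (a + b) = f a + f b"
  and fmul: "\<forall>a\<in>Bsub n. \<forall>b\<in>Bsub n. f (a * b) = f a * f b"
  and fsm: "\<forall>a\<in>Bsub n. \<forall>c. f (smult c a) = smult c (f a)"
  and fV: "\<And>j. 1 \<le> j \<Longrightarrow> j \<le> n \<Longrightarrow> f (Var j) = smult (character (\<chi> j) h) (Var j)"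
  and p: "p \<in> Bsub n"
  shows "f p = Rh \<chi> h p"
proof (rule Bsub_induct[OF p, where P="\<lambda>p. f p = Rh \<chi> h p"])
  fix c
  have "f (Const c) = f (smult c 1)" by (simp add: smult_one)
  also have "\<dots> = Const c" using fsm f1 Bsub_one by (metis smult_one)
  finally show "f (Const c) = Rh \<chi> h (Const c)" by (simp add: Rh_def Const_def scal_single)
next
  fix j q assume 2: "1 \<le> j" "j \<le> n" "q \<in> Bsub n" "f q = Rh \<chi> h q"
  have m: "\<And>\<mu> \<nu>. character (wt \<chi> (\<mu> + \<nu>)) h = character (wt \<chi> \<mu>) h * character (wt \<chi> \<nu>) h"
    by (simp add: wt_add_fun char_add[OF ht])
  have "f (Var j * q) = f (Var j) * f q" using fmul 2 Bsub_Var by blast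
  also have "\<dots> = Rh \<chi> h (Var j) * Rh \<chi> h q" using 2 fV by (simp add: Rh_Var)
  also have "\<dots> = Rh \<chi> h (Var j * q)" unfolding Rh_def by (rule scal_mult[symmetric]) (rule m)
  finally show "f (Var j * q) = Rh \<chi> h (Var j * q)" .
next
  fix p q assume 3: "p \<in> Bsub n" "q \<in> Bsub n" "f p = Rh \<chi> h p" "f q = Rh \<chi> h q"
  then show "f (p + q) = Rh \<chi> h (p + q)" using fadd by (simp add: Rh_def scal_add)
qed

lemma der_agree:
  fixes D :: "'k::field mpoly \<Rightarrow> 'k mpoly" and \<eta> :: "'r::finite \<Rightarrow> 'k"
  assumes D: "derivation (Bsub k) D"
  and DV: "\<And>j. 1 \<le> j \<Longrightarrow> j \<le> k \<Longrightarrow> D (Var j) = smult (pairing \<eta> (\<chi> j)) (Var j)"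
  and p: "p \<in> Bsub k"
  shows "D p = Eop \<chi> \<eta> p"
proof (rule Bsub_induct[OF p, where P="\<lambda>p. D p = Eop \<chi> \<eta> p"])
  fix c
  show "D (Const c) = Eop \<chi> \<eta> (Const c)" using deriv_basic[OF D] by (simp add: Eop_def Const_def scal_single)
next
  fix j q assume 2: "1 \<le> j" "j \<le> k" "q \<in> Bsub k" "D q = Eop \<chi> \<eta> q"
  have m: "\<And>\<mu> \<nu>. pairing \<eta> (wt \<chi> (\<mu> + \<nu>)) = pairing \<eta> (wt \<chi> \<mu>) + pairing \<eta> (wt \<chi> \<nu>)"
    by (simp add: wt_add_fun pairing_add)
  have "D (Var j * q) = D (Var j) * q + Var j * D q" using D 2 Bsub_Var unfolding derivation_def by blast
  also have "\<dots> = Eop \<chi> \<eta> (Var j) * q + Var j * Eop \<chi> \<eta> q" using 2 DV by (simp add: Eop_Var)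
  also have "\<dots> = Eop \<chi> \<eta> (Var j * q)" unfolding Eop_def by (rule scal_deriv[symmetric]) (rule m)
  finally show "D (Var j * q) = Eop \<chi> \<eta> (Var j * q)" .
next
  fix p q assume 3: "p \<in> Bsub k" "q \<in> Bsub k" "D p = Eop \<chi> \<eta> p" "D q = Eop \<chi> \<eta> q"
  then show "D (p + q) = Eop \<chi> \<eta> (p + q)" using D unfolding derivation_def by (simp add: Eop_def scal_add)
qed

lemma eigen_weight:
  fixes e :: "'k::field_char_0 mpoly"
  assumes "\<forall>h\<in>(torus :: ('r::finite \<Rightarrow> 'k) set). Rh \<chi> h e = smult (character m h) e"
  and "\<mu> \<in> ks e"
  shows "wt \<chi> \<mu> = m"
proof (rule char_inj[where 'k = 'k], intro ballI)
  fix h :: "'r \<Rightarrow> 'k" assume "h \<in> torus"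
  then have "lk (Rh \<chi> h e) \<mu> = lk (smult (character m h) e) \<mu>" using assms by simp
  then have "character (wt \<chi> \<mu>) h * lk e \<mu> = character m h * lk e \<mu>"
    by (simp add: Rh_def lookup_scal lookup_smult)
  then show "character (wt \<chi> \<mu>) h = character m h" using assms(2) by (simp add: in_keys_iff)
qed

lemma Eop_eigen:
  fixes e :: "'k::field_char_0 mpoly"
  assumes "\<forall>h\<in>(torus :: ('r::finite \<Rightarrow> 'k) set). Rh \<chi> h e = smult (character m h) e"
  shows "Eop \<chi> \<eta> e = smult (pairing \<eta> m) e"
proof (rule poly_mapping_eqI)
  fix \<mu>
  show "lk (Eop \<chi> \<eta> e) \<mu> = lk (smult (pairing \<eta> m) e) \<mu>"
  proof (cases "\<mu> \<in> ks e")
    case True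
    then show ?thesis using eigen_weight[OF assms True] by (simp add: Eop_def lookup_scal lookup_smult)
  next
    case False
    then show ?thesis by (simp add: Eop_def lookup_scal lookup_smult in_keys_iff)
  qed
qed

lemma smult_smult: "smult c (smult d p) = smult (c * d) (p::'k::field mpoly)"
  by (simp add: smult_def mult.assoc[symmetric] Const_mult)

lemma smult_neg: "smult c (- p) = - smult c (p::'k::field mpoly)"
  by (simp add: smult_def)

lemma smult_zero[simp]: "smult c (0::'k::field mpoly) = 0"
  by (simp add: smult_def)

lemma br_smult2:
  assumes PB: "poisson_bracket B br" and a: "a \<in> B" and b: "b \<in> B"
  and sm: "\<And>c x. x \<in> B \<Longrightarrow> smult c x \<in> B"
  shows "br (smult c a) (smult d b) = smult (c * d) (br a b)"
proof -
  have bil: "\<forall>a\<in>B. \<forall>b\<in>B. \<forall>c. br (smult c a) b = smult c (br a b)"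
    using PB unfolding poisson_bracket_def by (elim conjE) assumption
  have anti: "\<forall>a\<in>B. \<forall>b\<in>B. br a b = - br b a" using PB unfolding poisson_bracket_def by (elim conjE) assumption
  have "br a (smult d b) = - br (smult d b) a" by (rule anti[rule_format, OF a sm[OF b]])
  also have "\<dots> = - smult d (br b a)" by (simp only: bil[rule_format, OF b a])
  also have "\<dots> = smult d (br a b)" by (simp only: anti[rule_format, OF b a] smult_neg minus_minus)
  finally have 1: "br a (smult d b) = smult d (br a b)" .
  have "br (smult c a) (smult d b) = smult c (br a (smult d b))" by (rule bil[rule_format, OF a sm[OF b]])
  then show ?thesis using 1 by (simp add: smult_smult)
qed

lemma add_diff_hom:
  assumes "\<forall>a\<in>B. \<forall>b\<in>B. f (a + b) = f a + f b" "a - b \<in> B" "b \<in> B"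
  shows "f (a - b) = f a - (f (b::'k::field mpoly) :: 'k::field mpoly)"
proof -
  have "f (a - b + b) = f (a - b) + f b" using assms(1) assms(2,3) by blast
  then show ?thesis by simp
qed



lemma derivD:
  assumes "derivation B d"
  shows "a \<in> B \<Longrightarrow> d a \<in> B" "a \<in> B \<Longrightarrow> b \<in> B \<Longrightarrow> d (a + b) = d a + d b"
    "a \<in> B \<Longrightarrow> d (smult c a) = smult c (d a)" "a \<in> B \<Longrightarrow> b \<in> B \<Longrightarrow> d (a * b) = d a * b + a * d b"
  using assms by (simp_all add: derivation_def)

lemma autD:
  assumes "poisson_automorphism B br f"
  shows "f 1 = 1" "\<forall>a\<in>B. \<forall>b\<in>B. f (a + b) = f a + f b" "\<forall>a\<in>B. \<forall>b\<in>B. f (a * b) = f a * f b"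
    "\<forall>a\<in>B. \<forall>c. f (smult c a) = smult c (f a)" "\<forall>a\<in>B. \<forall>b\<in>B. f (br a b) = br (f a) (f b)"
  using assms by (simp_all add: poisson_automorphism_def)

lemma pbD:
  assumes "poisson_bracket B br"
  shows "a \<in> B \<Longrightarrow> b \<in> B \<Longrightarrow> br a b \<in> B"
proof -
  have "\<forall>a\<in>B. \<forall>b\<in>B. br a b \<in> B" using assms unfolding poisson_bracket_def by (elim conjE) assumption
  then show "a \<in> B \<Longrightarrow> b \<in> B \<Longrightarrow> br a b \<in> B" by blast
qed

theorem lemma4p2:
  fixes n :: nat
    and br :: "'k::field_char_0 mpoly \<Rightarrow> 'k mpoly \<Rightarrow> 'k mpoly"
    and \<alpha> \<delta> :: "nat \<Rightarrow> 'k mpoly \<Rightarrow> 'k mpoly"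
    and \<rho> :: "('r::finite \<Rightarrow> 'k) \<Rightarrow> 'k mpoly \<Rightarrow> 'k mpoly"
    and \<chi> :: "nat \<Rightarrow> 'r \<Rightarrow> int"
    and \<eta> :: "nat \<Rightarrow> 'r \<Rightarrow> 'k"
  assumes "1 \<le> n"
    and "iterated_poisson n br \<alpha> \<delta>"
    and "rational_poisson_action (Bsub n) br \<rho>"
    and "\<forall>j\<in>{1..n}. Var j \<in> eigenspace (Bsub n) \<rho> (\<chi> j)"
    and "\<forall>i\<in>{1..n}. \<forall>j\<in>{1..n}. j < i \<longrightarrow> smult (pairing (\<eta> i) (\<chi> j)) (Var j) = \<alpha> i (Var j)"
    and "\<forall>i\<in>{1..n}. pairing (\<eta> i) (\<chi> i) \<noteq> 0"
  shows "\<forall>i\<in>{2..n}. \<forall>b\<in>Bsub (i - 1).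
           \<alpha> i (\<delta> i b) = \<delta> i (\<alpha> i b) + smult (pairing (\<eta> i) (\<chi> i)) (\<delta> i b)"
proof -
  have PBall: "\<forall>i\<in>{1..n}. poisson_bracket (Bsub i) br"
    using assms(2) unfolding iterated_poisson_def by (elim conjE) assumption
  have IT: "\<forall>i\<in>{2..n}. poisson_derivation (Bsub (i - 1)) br (\<alpha> i) \<and>
                 twisted_derivation (Bsub (i - 1)) br (\<alpha> i) (\<delta> i) \<and>
                 (\<forall>b\<in>Bsub (i - 1). br (Var i) b = \<alpha> i b * Var i + \<delta> i b)"
    using assms(2) unfolding iterated_poisson_def by (elim conjE) assumption
  have nn: "n \<in> {1..n}" using assms(1) by simp
  have PB: "poisson_bracket (Bsub n) br" by (rule PBall[rule_format, OF nn])
  have PA: "\<forall>h\<in>torus. poisson_automorphism (Bsub n) br (\<rho> h)"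
    using assms(3) unfolding rational_poisson_action_def by (elim conjE) assumption
  have rV: "\<rho> h (Var j) = smult (character (\<chi> j) h) (Var j)" if "h \<in> torus" "1 \<le> j" "j \<le> n" for h j
  proof -
    have "j \<in> {1..n}" using that by simp
    then have "Var j \<in> eigenspace (Bsub n) \<rho> (\<chi> j)" using assms(4) by (rule bspec[rotated])
    then have "\<forall>h\<in>torus. \<rho> h (Var j) = smult (character (\<chi> j) h) (Var j)"
      unfolding eigenspace_def mem_Collect_eq by (elim conjE)
    then show ?thesis using that(1) by (rule bspec)
  qed
  have RR: "\<rho> h p = Rh \<chi> h p" if h: "h \<in> torus" and p: "p \<in> Bsub n" for h p
  proof -
    have aut: "poisson_automorphism (Bsub n) br (\<rho> h)" using PA h by (rule bspec)
    show ?thesis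
      by (rule hom_agree[OF h autD(1)[OF aut] autD(2)[OF aut] autD(3)[OF aut] autD(4)[OF aut] rV[OF h] p])
  qed
  show ?thesis
  proof (intro ballI)
    fix i and b :: "'k mpoly" assume i: "i \<in> {2..n}" and b: "b \<in> Bsub (i - 1)"
    define k where "k = i - 1"
    have k1: "1 \<le> k" and kn: "k \<le> n" and ki: "k < i" and i1: "i \<in> {1..n}" using i by (auto simp: k_def)
    have ITi: "poisson_derivation (Bsub k) br (\<alpha> i) \<and> twisted_derivation (Bsub k) br (\<alpha> i) (\<delta> i)
      \<and> (\<forall>b\<in>Bsub k. br (Var i) b = \<alpha> i b * Var i + \<delta> i b)"
      unfolding k_def by (rule IT[rule_format, OF i])
    have PD: "poisson_derivation (Bsub k) br (\<alpha> i)" using ITi by (elim conjE)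
    have TD: "twisted_derivation (Bsub k) br (\<alpha> i) (\<delta> i)" using ITi by (elim conjE)
    have BR: "\<forall>b\<in>Bsub k. br (Var i) b = \<alpha> i b * Var i + \<delta> i b" using ITi by (elim conjE)
    have Da: "derivation (Bsub k) (\<alpha> i)" using PD unfolding poisson_derivation_def by (elim conjE)
    have Dd: "derivation (Bsub k) (\<delta> i)" using TD unfolding twisted_derivation_def by (elim conjE)
    define s where "s = pairing (\<eta> i) (\<chi> i)"
    have aV: "\<alpha> i (Var j) = smult (pairing (\<eta> i) (\<chi> j)) (Var j)" if "1 \<le> j" "j \<le> k" for j
    proof -
      have "j \<in> {1..n}" "j < i" using that kn ki by auto
      then have "smult (pairing (\<eta> i) (\<chi> j)) (Var j) = \<alpha> i (Var j)"
        by (rule assms(5)[rule_format, OF i1])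
      then show ?thesis by (rule sym)
    qed
    have AE: "\<alpha> i p = Eop \<chi> (\<eta> i) p" if "p \<in> Bsub k" for p
      by (rule der_agree[OF Da aV that])
    have dV: "\<alpha> i (\<delta> i (Var j)) = smult (pairing (\<eta> i) (\<chi> j) + s) (\<delta> i (Var j))"
      if j: "1 \<le> j" "j \<le> k" for j
    proof -
      define t where "t = pairing (\<eta> i) (\<chi> j)"
      have xk: "Var j \<in> Bsub k" using j by (rule Bsub_Var)
      have xn: "Var j \<in> Bsub n" using j kn by (intro Bsub_Var) auto
      have yn: "Var i \<in> Bsub n" using i by (intro Bsub_Var) auto
      have dxk: "\<delta> i (Var j) \<in> Bsub k" using xk by (rule derivD(1)[OF Dd])
      have dxn: "\<delta> i (Var j) \<in> Bsub n" using kn dxk by (rule Bsub_mono)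
      have "br (Var i) (Var j) = \<alpha> i (Var j) * Var i + \<delta> i (Var j)" using BR xk by (rule bspec)
      then have dxe: "\<delta> i (Var j) = br (Var i) (Var j) - smult t (Var j) * Var i"
        using aV[OF j] by (simp add: t_def)
      have eig: "\<forall>h\<in>torus. Rh \<chi> h (\<delta> i (Var j)) = smult (character (\<lambda>l. \<chi> i l + \<chi> j l) h) (\<delta> i (Var j))"
      proof
        fix h :: "'r \<Rightarrow> 'k" assume ht: "h \<in> torus"
        define ci where "ci = character (\<chi> i) h"
        define cj where "cj = character (\<chi> j) h"
        have aut: "poisson_automorphism (Bsub n) br (\<rho> h)" using PA ht by (rule bspec)
        note fadd = autD(2)[OF aut] and fmul = autD(3)[OF aut] and fsm = autD(4)[OF aut] and fbr = autD(5)[OF aut]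
        have rx: "\<rho> h (Var j) = smult cj (Var j)" using rV[OF ht] j kn by (simp add: cj_def)
        have ry: "\<rho> h (Var i) = smult ci (Var i)" using rV[OF ht] i by (simp add: ci_def)
        have brn: "br (Var i) (Var j) \<in> Bsub n" using yn xn by (rule pbD[OF PB])
        have sxn: "smult t (Var j) \<in> Bsub n" using xn by (rule Bsub_smult)
        have pn: "smult t (Var j) * Var i \<in> Bsub n" using sxn yn by (rule Bsub_mult)
        have "\<rho> h (br (Var i) (Var j)) = br (\<rho> h (Var i)) (\<rho> h (Var j))"
          by (rule fbr[rule_format, OF yn xn])
        also have "\<dots> = smult (ci * cj) (br (Var i) (Var j))"
          unfolding rx ry by (rule br_smult2[OF PB yn xn Bsub_smult])
        finally have r1: "\<rho> h (br (Var i) (Var j)) = smult (ci * cj) (br (Var i) (Var j))" .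
        have "\<rho> h (smult t (Var j) * Var i) = \<rho> h (smult t (Var j)) * \<rho> h (Var i)"
          by (rule fmul[rule_format, OF sxn yn])
        also have "\<dots> = smult t (smult cj (Var j)) * smult ci (Var i)" by (simp only: fsm[rule_format, OF xn] rx ry)
        also have "\<dots> = smult (ci * cj) (smult t (Var j) * Var i)"
          by (simp add: smult_def Const_mult algebra_simps)
        finally have r2: "\<rho> h (smult t (Var j) * Var i) = smult (ci * cj) (smult t (Var j) * Var i)" .
        have "\<rho> h (\<delta> i (Var j)) = \<rho> h (br (Var i) (Var j)) - \<rho> h (smult t (Var j) * Var i)"
          unfolding dxe by (rule add_diff_hom[OF fadd Bsub_diff[OF brn pn] pn])
        also have "\<dots> = smult (ci * cj) (\<delta> i (Var j))"
          unfolding r1 r2 dxe by (simp add: smult_def algebra_simps)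
        finally have "\<rho> h (\<delta> i (Var j)) = smult (ci * cj) (\<delta> i (Var j))" .
        moreover have "character (\<lambda>l. \<chi> i l + \<chi> j l) h = ci * cj"
          using char_add[OF ht] by (simp add: ci_def cj_def)
        ultimately show "Rh \<chi> h (\<delta> i (Var j)) = smult (character (\<lambda>l. \<chi> i l + \<chi> j l) h) (\<delta> i (Var j))"
          using RR[OF ht dxn] by simp
      qed
      have "\<alpha> i (\<delta> i (Var j)) = Eop \<chi> (\<eta> i) (\<delta> i (Var j))" using dxk by (rule AE)
      also have "\<dots> = smult (pairing (\<eta> i) (\<lambda>l. \<chi> i l + \<chi> j l)) (\<delta> i (Var j))"
        by (rule Eop_eigen[OF eig])
      also have "\<dots> = smult (t + s) (\<delta> i (Var j))" by (simp add: pairing_add s_def t_def add.commute)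
      finally show ?thesis by (simp add: t_def)
    qed
    note dmem = derivD(1)[OF Dd] and dadd = derivD(2)[OF Dd] and dsm = derivD(3)[OF Dd] and dmul = derivD(4)[OF Dd]
    note amem = derivD(1)[OF Da] and aadd = derivD(2)[OF Da] and amul = derivD(4)[OF Da]
    have LV: "\<alpha> i (\<delta> i (Var j)) = \<delta> i (\<alpha> i (Var j)) + smult s (\<delta> i (Var j))"
      if j: "1 \<le> j" "j \<le> k" for j
    proof -
      have xk: "Var j \<in> Bsub k" using j by (rule Bsub_Var)
      have "\<delta> i (\<alpha> i (Var j)) = smult (pairing (\<eta> i) (\<chi> j)) (\<delta> i (Var j))"
        unfolding aV[OF j] using xk by (rule dsm)
      then show ?thesis using dV[OF j] by (simp add: smult_def Const_add[symmetric] algebra_simps)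
    qed
    have "\<alpha> i (\<delta> i b) = \<delta> i (\<alpha> i b) + smult s (\<delta> i b)"
    proof (rule Bsub_induct[OF b[folded k_def], where P="\<lambda>b. \<alpha> i (\<delta> i b) = \<delta> i (\<alpha> i b) + smult s (\<delta> i b)"])
      fix c
      show "\<alpha> i (\<delta> i (Const c)) = \<delta> i (\<alpha> i (Const c)) + smult s (\<delta> i (Const c))"
        using deriv_basic[OF Da] deriv_basic[OF Dd] by simp
    next
      fix j q assume j: "1 \<le> j" "j \<le> k" and q: "q \<in> Bsub k"
        and IH: "\<alpha> i (\<delta> i q) = \<delta> i (\<alpha> i q) + smult s (\<delta> i q)"
      have x: "Var j \<in> Bsub k" using j by (rule Bsub_Var)
      have dx: "\<delta> i (Var j) \<in> Bsub k" and dq: "\<delta> i q \<in> Bsub k"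
        and ax: "\<alpha> i (Var j) \<in> Bsub k" and aq: "\<alpha> i q \<in> Bsub k"
        using dmem amem x q by auto
      have d1: "\<delta> i (Var j * q) = \<delta> i (Var j) * q + Var j * \<delta> i q" using x q by (rule dmul)
      have a1: "\<alpha> i (Var j * q) = \<alpha> i (Var j) * q + Var j * \<alpha> i q" using x q by (rule amul)
      have a2: "\<alpha> i (\<delta> i (Var j) * q + Var j * \<delta> i q) = \<alpha> i (\<delta> i (Var j) * q) + \<alpha> i (Var j * \<delta> i q)"
        using Bsub_mult[OF dx q] Bsub_mult[OF x dq] by (rule aadd)
      have a3: "\<alpha> i (\<delta> i (Var j) * q) = \<alpha> i (\<delta> i (Var j)) * q + \<delta> i (Var j) * \<alpha> i q"
        using dx q by (rule amul)
      have a4: "\<alpha> i (Var j * \<delta> i q) = \<alpha> i (Var j) * \<delta> i q + Var j * \<alpha> i (\<delta> i q)"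
        using x dq by (rule amul)
      have d2: "\<delta> i (\<alpha> i (Var j) * q + Var j * \<alpha> i q) = \<delta> i (\<alpha> i (Var j) * q) + \<delta> i (Var j * \<alpha> i q)"
        using Bsub_mult[OF ax q] Bsub_mult[OF x aq] by (rule dadd)
      have d3: "\<delta> i (\<alpha> i (Var j) * q) = \<delta> i (\<alpha> i (Var j)) * q + \<alpha> i (Var j) * \<delta> i q"
        using ax q by (rule dmul)
      have d4: "\<delta> i (Var j * \<alpha> i q) = \<delta> i (Var j) * \<alpha> i q + Var j * \<delta> i (\<alpha> i q)"
        using x aq by (rule dmul)
      show "\<alpha> i (\<delta> i (Var j * q)) = \<delta> i (\<alpha> i (Var j * q)) + smult s (\<delta> i (Var j * q))"
        unfolding d1 a1 a2 a3 a4 d2 d3 d4 IH LV[OF j] by (simp add: smult_def algebra_simps)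
    next
      fix p q assume p: "p \<in> Bsub k" and q: "q \<in> Bsub k"
        and IHp: "\<alpha> i (\<delta> i p) = \<delta> i (\<alpha> i p) + smult s (\<delta> i p)"
        and IHq: "\<alpha> i (\<delta> i q) = \<delta> i (\<alpha> i q) + smult s (\<delta> i q)"
      have dp: "\<delta> i p \<in> Bsub k" and dq: "\<delta> i q \<in> Bsub k"
        and ap: "\<alpha> i p \<in> Bsub k" and aq: "\<alpha> i q \<in> Bsub k"
        using dmem amem p q by auto
      have e1: "\<delta> i (p + q) = \<delta> i p + \<delta> i q" using p q by (rule dadd)
      have e2: "\<alpha> i (p + q) = \<alpha> i p + \<alpha> i q" using p q by (rule aadd)
      have e3: "\<alpha> i (\<delta> i p + \<delta> i q) = \<alpha> i (\<delta> i p) + \<alpha> i (\<delta> i q)" using dp dq by (rule aadd)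
      have e4: "\<delta> i (\<alpha> i p + \<alpha> i q) = \<delta> i (\<alpha> i p) + \<delta> i (\<alpha> i q)" using ap aq by (rule dadd)
      show "\<alpha> i (\<delta> i (p + q)) = \<delta> i (\<alpha> i (p + q)) + smult s (\<delta> i (p + q))"
        unfolding e1 e2 e3 e4 IHp IHq by (simp add: smult_def algebra_simps)
    qed
    then show "\<alpha> i (\<delta> i b) = \<delta> i (\<alpha> i b) + smult (pairing (\<eta> i) (\<chi> i)) (\<delta> i b)"
      by (simp add: s_def)
  qed
qed

end
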